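(* Let $k\in\mathbb{Z}_+$ and let $a\in L_1(\mathbb{R}_+)\cup L_\infty(\mathbb{R}_+)$ be such that $\gamma_{a,k}\in L_\infty(\mathbb{R}_+)$, where $\gamma_{a,k}(\xi)=2\xi\int_{\mathbb{R}_+}a(v)\,\ell_k^2(2v\xi)\,\mathrm{d}v$, $\xi>0$. Then for each $n=1,2,\dots$, $$\lim_{\xi\to+\infty}\frac{\mathrm{d}^n\gamma_{a,k}(\xi)}{\mathrm{d}\xi^n}=0.$$
   Context: $\mathbb{R}_+=(0,\infty)$, $\mathbb{Z}_+=\{0,1,2,\dots\}$. $L_k(x)=\sum_{i=0}^k(-1)^i\binom{k}{i}\frac{x^i}{i!}$ is the Laguerre polynomial of degree $k$ and $\ell_k(x)=e^{-x/2}L_k(x)$. *)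

theory Defs
  imports "HOL-Analysis.Analysis"
begin

definition laguerre :: "nat \<Rightarrow> real \<Rightarrow> real" where
  "laguerre k x = (\<Sum>i\<le>k. (-1) ^ i * real (k choose i) * x ^ i / fact i)"

definition laguerre_fun :: "nat \<Rightarrow> real \<Rightarrow> real" where
  "laguerre_fun k x = exp (- x / 2) * laguerre k x"

definition L1_pos :: "(real \<Rightarrow> real) \<Rightarrow> bool" where
  "L1_pos f \<longleftrightarrow> set_integrable lborel {0<..} f"

definition Linf_pos :: "(real \<Rightarrow> real) \<Rightarrow> bool" where
  "Linf_pos f \<longleftrightarrow> set_borel_measurable lborel {0<..} f \<and>
     (\<exists>C. AE x in lborel. x \<in> {0<..} \<longrightarrow> \<bar>f x\<bar> \<le> C)"

definition gamma_ak :: "(real \<Rightarrow> real) \<Rightarrow> nat \<Rightarrow> real \<Rightarrow> real" where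
  "gamma_ak a k \<xi> = 2 * \<xi> * (LINT v:{0<..}|lborel. a v * (laguerre_fun k (2 * v * \<xi>))\<^sup>2)"

end

theory Submission imports Defs "HOL-Computational_Algebra.Polynomial" "HOL-Real_Asymp.Real_Asymp" begin

lemma pow_le_exp_fact:
  fixes x :: real assumes "x \<ge> 0"
  shows "x ^ n \<le> fact n * exp x"
proof -
  have s: "summable (\<lambda>i. x ^ i /\<^sub>R fact i)" using exp_converges sums_summable by blast
  have "x ^ n /\<^sub>R fact n \<le> (\<Sum>i. x ^ i /\<^sub>R fact i)"
  proof -
    have "(\<Sum>i\<in>{n}. x ^ i /\<^sub>R fact i) \<le> (\<Sum>i. x ^ i /\<^sub>R fact i)"
      by (rule sum_le_suminf[OF s]) (use assms in auto)
    then show ?thesis by simp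
  qed
  also have "\<dots> = exp x" by (simp add: exp_def)
  finally show ?thesis by (simp add: field_simps)
qed

lemma poly_exp_bound:
  fixes P :: "real poly"
  shows "\<exists>B\<ge>0. \<forall>x\<ge>0. \<bar>x ^ m * (exp (-2*x) * poly P x)\<bar> \<le> B * exp (- x)"
proof -
  define B where "B = (\<Sum>i\<le>degree P. \<bar>coeff P i\<bar> * fact (i + m))"
  have "B \<ge> 0" unfolding B_def by (intro sum_nonneg) auto
  moreover have "\<bar>x ^ m * (exp (-2*x) * poly P x)\<bar> \<le> B * exp (- x)" if x: "x \<ge> 0" for x
  proof -
    have e: "exp (-2*x) = exp (-x) * exp (-x)" by (simp flip: exp_add)
    have "\<bar>x ^ m * (exp (-2*x) * poly P x)\<bar> = exp (-x) * \<bar>\<Sum>i\<le>degree P. coeff P i * (x ^ (i+m) * exp (-x))\<bar>"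
    proof -
      have "x ^ m * (exp (-2*x) * poly P x) = exp (-x) * (\<Sum>i\<le>degree P. coeff P i * (x ^ (i+m) * exp (-x)))"
        unfolding e poly_altdef by (simp add: sum_distrib_left sum_distrib_right power_add mult_ac)
      then show ?thesis by (simp add: abs_mult)
    qed
    also have "\<dots> \<le> exp (-x) * (\<Sum>i\<le>degree P. \<bar>coeff P i\<bar> * fact (i + m))"
    proof (intro mult_left_mono order.trans[OF sum_abs] sum_mono)
      fix i
      have "x ^ (i+m) \<le> fact (i+m) * exp x" by (rule pow_le_exp_fact[OF x])
      then have "x ^ (i+m) * exp (-x) \<le> fact (i+m)" by (simp add: exp_minus field_simps)
      moreover have "0 \<le> x ^ (i+m) * exp (-x)" using x by simp
      ultimately show "\<bar>coeff P i * (x ^ (i + m) * exp (- x))\<bar> \<le> \<bar>coeff P i\<bar> * fact (i + m)"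
        by (simp add: abs_mult mult_left_mono)
    qed simp
    finally show ?thesis unfolding B_def by (simp add: mult_ac)
  qed
  ultimately show ?thesis by blast
qed

lemma mvt_abs_bound:
  fixes f f' :: "real \<Rightarrow> real"
  assumes "\<And>t. min a b \<le> t \<Longrightarrow> t \<le> max a b \<Longrightarrow> (f has_real_derivative f' t) (at t)"
    and "\<And>t. min a b \<le> t \<Longrightarrow> t \<le> max a b \<Longrightarrow> \<bar>f' t\<bar> \<le> M"
  shows "\<bar>f b - f a\<bar> \<le> M * \<bar>b - a\<bar>"
proof (cases a b rule: linorder_cases)
  case less
  then obtain z where z: "a < z" "z < b" "f b - f a = (b - a) * f' z"
    using MVT2[of a b f f'] assms(1) by force
  have "\<bar>f' z\<bar> \<le> M" using assms(2)[of z] z less by auto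
  then show ?thesis using z less by (simp add: abs_mult mult.commute mult_right_mono)
next
  case equal then show ?thesis by simp
next
  case greater
  then obtain z where z: "b < z" "z < a" "f a - f b = (a - b) * f' z"
    using MVT2[of b a f f'] assms(1) by force
  have "\<bar>f' z\<bar> \<le> M" using assms(2)[of z] z greater by auto
  then have "\<bar>f a - f b\<bar> \<le> M * \<bar>a - b\<bar>" using z greater by (simp add: abs_mult mult.commute mult_right_mono)
  then show ?thesis by (simp add: abs_minus_commute)
qed

lemma DCT_at:
  fixes s :: "real \<Rightarrow> real \<Rightarrow> real" and w f :: "real \<Rightarrow> real"
  assumes f: "f \<in> borel_measurable M" and s: "\<And>t. t \<noteq> t0 \<Longrightarrow> \<bar>t - t0\<bar> < d \<Longrightarrow> s t \<in> borel_measurable M"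
    and w: "integrable M w"
    and lim: "\<And>x. x \<in> space M \<Longrightarrow> ((\<lambda>t. s t x) \<longlongrightarrow> f x) (at t0)"
    and d: "d > 0"
    and bnd: "\<And>t x. t \<noteq> t0 \<Longrightarrow> \<bar>t - t0\<bar> < d \<Longrightarrow> x \<in> space M \<Longrightarrow> \<bar>s t x\<bar> \<le> w x"
  shows "((\<lambda>t. integral\<^sup>L M (s t)) \<longlongrightarrow> integral\<^sup>L M f) (at t0)"
  unfolding tendsto_at_iff_sequentially
proof (intro allI impI)
  fix X :: "nat \<Rightarrow> real"
  assume X: "\<forall>i. X i \<in> UNIV - {t0}" and Xl: "X \<longlonglongrightarrow> t0"
  then have "eventually (\<lambda>n. dist (X n) t0 < d) sequentially"
    using d by (simp add: tendsto_iff)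
  then obtain N where N: "\<And>n. n \<ge> N \<Longrightarrow> \<bar>X n - t0\<bar> < d"
    by (auto simp: eventually_sequentially dist_real_def)
  have "(\<lambda>n. integral\<^sup>L M (s (X (n + N)))) \<longlonglongrightarrow> integral\<^sup>L M f"
  proof (rule integral_dominated_convergence[where w = w])
    show "AE x in M. norm (s (X (n + N)) x) \<le> w x" for n
      using N[of "n+N"] X bnd by (intro AE_I2) auto
    show "AE x in M. (\<lambda>n. s (X (n + N)) x) \<longlonglongrightarrow> f x"
    proof (intro AE_I2)
      fix x assume x: "x \<in> space M"
      have "(\<lambda>n. s (X n) x) \<longlonglongrightarrow> f x"
        using lim[OF x] X Xl unfolding tendsto_at_iff_sequentially by (auto simp: o_def)
      then show "(\<lambda>n. s (X (n + N)) x) \<longlonglongrightarrow> f x"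
        by (rule LIMSEQ_ignore_initial_segment)
    qed
    show "s (X (n + N)) \<in> borel_measurable M" for n
      using N[of "n+N"] X s by auto
  qed (use f w in auto)
  then show "((\<lambda>t. integral\<^sup>L M (s t)) \<circ> X) \<longlonglongrightarrow> integral\<^sup>L M f"
    unfolding o_def by (rule LIMSEQ_offset)
qed

lemma deriv_integral:
  fixes \<phi> \<psi> :: "real \<Rightarrow> real \<Rightarrow> real" and w :: "real \<Rightarrow> real"
  assumes d: "d > 0"
    and int: "\<And>x. \<bar>x - x0\<bar> < d \<Longrightarrow> integrable lborel (\<lambda>v. \<phi> v x)"
    and meas: "(\<lambda>v. \<psi> v x0) \<in> borel_measurable lborel"
    and der: "\<And>v x. \<bar>x - x0\<bar> < d \<Longrightarrow> ((\<lambda>x. \<phi> v x) has_real_derivative \<psi> v x) (at x)"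
    and bnd: "\<And>v x. \<bar>x - x0\<bar> < d \<Longrightarrow> \<bar>\<psi> v x\<bar> \<le> w v"
    and w: "integrable lborel w"
  shows "((\<lambda>x. integral\<^sup>L lborel (\<lambda>v. \<phi> v x)) has_real_derivative integral\<^sup>L lborel (\<lambda>v. \<psi> v x0)) (at x0)"
proof -
  define s where "s t v = (\<phi> v t - \<phi> v x0) / (t - x0)" for t v
  have int0: "integrable lborel (\<lambda>v. \<phi> v x0)" using int d by simp
  have lim: "((\<lambda>t. integral\<^sup>L lborel (s t)) \<longlongrightarrow> integral\<^sup>L lborel (\<lambda>v. \<psi> v x0)) (at x0)"
  proof (rule DCT_at[where d = d and w = w])
    show "s t \<in> borel_measurable lborel" if "t \<noteq> x0" "\<bar>t - x0\<bar> < d" for t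
      unfolding s_def using int[OF that(2)] int0
      by (intro borel_measurable_divide borel_measurable_diff) auto
    show "((\<lambda>t. s t v) \<longlongrightarrow> \<psi> v x0) (at x0)" for v
      using der[of x0 v] d unfolding s_def has_field_derivative_iff by simp
    show "\<bar>s t v\<bar> \<le> w v" if "t \<noteq> x0" "\<bar>t - x0\<bar> < d" for t v
    proof -
      have "\<bar>\<phi> v t - \<phi> v x0\<bar> \<le> w v * \<bar>t - x0\<bar>"
      proof (rule mvt_abs_bound[where f' = "\<lambda>x. \<psi> v x"])
        fix y assume "min x0 t \<le> y" "y \<le> max x0 t"
        then have "\<bar>y - x0\<bar> < d" using that by (auto simp: min_def max_def split: if_splits)
        then show "((\<lambda>x. \<phi> v x) has_real_derivative \<psi> v y) (at y)" "\<bar>\<psi> v y\<bar> \<le> w v"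
          using der bnd by auto
      qed
      then show ?thesis using that unfolding s_def by (simp add: abs_div divide_le_eq)
    qed
  qed (use d meas w in auto)
  have ev: "eventually (\<lambda>t. integral\<^sup>L lborel (s t) =
      (integral\<^sup>L lborel (\<lambda>v. \<phi> v t) - integral\<^sup>L lborel (\<lambda>v. \<phi> v x0)) / (t - x0)) (at x0)"
  proof -
    have "eventually (\<lambda>t. t \<in> ball x0 d) (at x0)"
      using d by (intro eventually_at_in_open') auto
    then show ?thesis
    proof eventually_elim
      case (elim t)
      then have "\<bar>t - x0\<bar> < d" by (simp add: dist_real_def abs_minus_commute)
      then show ?case unfolding s_def using int int0
        by (simp add: integral_diff)
    qed
  qed
  show ?thesis unfolding has_field_derivative_iff
    using Lim_transform_eventually[OF lim ev] by simp
qed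


definition Lp :: "nat \<Rightarrow> real poly" where
  "Lp k = (\<Sum>i\<le>k. monom ((-1) ^ i * real (k choose i) * 2 ^ i / fact i) i)"

fun Qp :: "nat \<Rightarrow> nat \<Rightarrow> real poly" where
  "Qp k 0 = [:0, 2:] * (Lp k)^2"
| "Qp k (Suc n) = pderiv (Qp k n) - smult 2 (Qp k n)"

definition Gd :: "nat \<Rightarrow> nat \<Rightarrow> real \<Rightarrow> real" where
  "Gd k n x = exp (-2*x) * poly (Qp k n) x"

lemma poly_Lp: "poly (Lp k) x = laguerre k (2*x)"
  unfolding Lp_def laguerre_def by (simp add: poly_sum poly_monom power_mult_distrib mult.assoc)

lemma Gd_deriv: "(Gd k n has_real_derivative Gd k (Suc n) x) (at x)"
  unfolding Gd_def
  by (auto intro!: derivative_eq_intros poly_DERIV simp: algebra_simps)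

lemma Gd0_div: "v > 0 \<Longrightarrow> Gd k 0 (v * \<xi>) / v = 2 * \<xi> * (laguerre_fun k (2 * v * \<xi>))\<^sup>2"
proof -
  assume v: "v > 0"
  have e: "exp (-2 * (v * \<xi>)) = (exp (- (2 * v * \<xi>) / 2)) ^ 2"
    by (simp flip: exp_of_nat_mult)
  have e2: "exp (- (\<xi> * (v * 2))) = (exp (- (\<xi> * v)))\<^sup>2"
    by (simp add: power2_eq_square flip: exp_add)
  show ?thesis using v
    unfolding Gd_def laguerre_fun_def by (simp add: poly_Lp e e2 power_mult_distrib mult_ac)
qed

lemma Gd_bound: "\<exists>B\<ge>0. \<forall>x\<ge>0. \<bar>x ^ m * Gd k n x\<bar> \<le> B * exp (- x)"
  unfolding Gd_def by (rule poly_exp_bound)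

lemma Gd0_bound: "\<exists>B\<ge>0. \<forall>x\<ge>0. \<bar>exp (-2*x) * poly ((Lp k)^2) x\<bar> \<le> B * exp (- x)"
  using poly_exp_bound[of 0 "(Lp k)^2"] by simp

lemma Gd0_eq: "Gd k 0 x = 2 * x * (exp (-2*x) * poly ((Lp k)^2) x)"
  unfolding Gd_def by simp


definition phi :: "(real \<Rightarrow> real) \<Rightarrow> nat \<Rightarrow> nat \<Rightarrow> real \<Rightarrow> real \<Rightarrow> real" where
  "phi a k m v \<xi> = indicator {0<..} v * a v * (v ^ m * Gd k m (v * \<xi>) / v)"

lemma meas_phi:
  assumes ma: "(\<lambda>v. indicator {0<..} v * a v) \<in> borel_measurable lborel"
  shows "(\<lambda>v. phi a k m v \<xi>) \<in> borel_measurable lborel"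
proof -
  have "(\<lambda>v. v ^ m * Gd k m (v * \<xi>) / v) \<in> borel_measurable lborel"
  proof -
    have "(\<lambda>v. v ^ m * Gd k m (v * \<xi>) / v) \<in> borel_measurable borel"
      unfolding Gd_def by (intro borel_measurable_divide borel_measurable_times borel_measurable_continuous_onI continuous_intros)
    then show ?thesis by simp
  qed
  from borel_measurable_times[OF ma this] show ?thesis unfolding phi_def by simp
qed


lemma phi_Suc_bound:
  "\<exists>B\<ge>0. \<forall>v \<xi>. \<xi> > 0 \<longrightarrow>
     \<bar>phi a k (Suc m) v \<xi>\<bar> \<le> indicator {0<..} v * \<bar>a v\<bar> * (B / \<xi> ^ m * exp (- \<xi> * v))"
proof -
  obtain B where B: "B \<ge> 0" "\<And>x. x \<ge> 0 \<Longrightarrow> \<bar>x ^ m * Gd k (Suc m) x\<bar> \<le> B * exp (- x)"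
    using Gd_bound[of m k "Suc m"] by blast
  have "\<bar>phi a k (Suc m) v \<xi>\<bar> \<le> indicator {0<..} v * \<bar>a v\<bar> * (B / \<xi> ^ m * exp (- \<xi> * v))"
    if \<xi>: "\<xi> > 0" for v \<xi>
  proof (cases "v > 0")
    case True
    have eq: "v ^ Suc m * Gd k (Suc m) (v * \<xi>) / v = ((v * \<xi>) ^ m * Gd k (Suc m) (v * \<xi>)) / \<xi> ^ m"
      using True \<xi> by (simp add: power_mult_distrib)
    have "\<bar>(v * \<xi>) ^ m * Gd k (Suc m) (v * \<xi>)\<bar> \<le> B * exp (- (v * \<xi>))"
      using B(2)[of "v * \<xi>"] True \<xi> by simp
    then have "\<bar>v ^ Suc m * Gd k (Suc m) (v * \<xi>) / v\<bar> \<le> B / \<xi> ^ m * exp (- \<xi> * v)"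
      unfolding eq using \<xi> by (simp add: abs_div divide_le_eq mult_ac)
    then have "\<bar>a v\<bar> * \<bar>v ^ Suc m * Gd k (Suc m) (v * \<xi>) / v\<bar> \<le> \<bar>a v\<bar> * (B / \<xi> ^ m * exp (- \<xi> * v))"
      by (rule mult_left_mono) simp
    moreover have "\<bar>phi a k (Suc m) v \<xi>\<bar> = \<bar>a v\<bar> * \<bar>v ^ Suc m * Gd k (Suc m) (v * \<xi>) / v\<bar>"
      unfolding phi_def using True by (simp only: indicator_simps mem_Collect_eq greaterThan_iff if_True mult_1_left abs_mult)
    ultimately show ?thesis using True by simp
  next
    case False
    then show ?thesis unfolding phi_def by simp
  qed
  with B(1) show ?thesis by blast
qed

lemma phi0_bound:
  "\<exists>B\<ge>0. \<forall>v \<xi>. \<xi> > 0 \<longrightarrow>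
     \<bar>phi a k 0 v \<xi>\<bar> \<le> indicator {0<..} v * \<bar>a v\<bar> * (2 * \<xi> * B * exp (- \<xi> * v))"
proof -
  obtain B where B: "B \<ge> 0" "\<And>x. x \<ge> 0 \<Longrightarrow> \<bar>exp (-2*x) * poly ((Lp k)^2) x\<bar> \<le> B * exp (- x)"
    using Gd0_bound[of k] by blast
  have "\<bar>phi a k 0 v \<xi>\<bar> \<le> indicator {0<..} v * \<bar>a v\<bar> * (2 * \<xi> * B * exp (- \<xi> * v))"
    if \<xi>: "\<xi> > 0" for v \<xi>
  proof (cases "v > 0")
    case True
    have eq: "Gd k 0 (v * \<xi>) / v = 2 * \<xi> * (exp (-2*(v * \<xi>)) * poly ((Lp k)^2) (v * \<xi>))"
      using True unfolding Gd0_eq by simp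
    have "\<bar>exp (-2*(v * \<xi>)) * poly ((Lp k)^2) (v * \<xi>)\<bar> \<le> B * exp (- (v * \<xi>))"
      using B(2)[of "v * \<xi>"] True \<xi> by simp
    then have "\<bar>Gd k 0 (v * \<xi>) / v\<bar> \<le> 2 * \<xi> * B * exp (- \<xi> * v)"
      unfolding eq using \<xi> by (simp add: abs_mult mult_ac)
    then have "\<bar>a v\<bar> * \<bar>v ^ 0 * Gd k 0 (v * \<xi>) / v\<bar> \<le> \<bar>a v\<bar> * (2 * \<xi> * B * exp (- \<xi> * v))"
      by (intro mult_left_mono) simp_all
    moreover have "\<bar>phi a k 0 v \<xi>\<bar> = \<bar>a v\<bar> * \<bar>v ^ 0 * Gd k 0 (v * \<xi>) / v\<bar>"
      unfolding phi_def using True by (simp only: indicator_simps mem_Collect_eq greaterThan_iff if_True mult_1_left abs_mult)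
    ultimately show ?thesis using True by simp
  next
    case False
    then show ?thesis unfolding phi_def by simp
  qed
  with B(1) show ?thesis by blast
qed


lemma int_dom:
  fixes f g :: "real \<Rightarrow> real"
  assumes "integrable lborel f" "g \<in> borel_measurable lborel" "\<And>x. \<bar>g x\<bar> \<le> f x"
  shows "integrable lborel g"
proof (rule Bochner_Integration.integrable_bound[OF assms(1,2)])
  show "AE x in lborel. norm (g x) \<le> norm (f x)"
    using assms(3) by (auto intro: order_trans[OF _ abs_ge_self])
qed

lemma int_phi:
  assumes ma: "(\<lambda>v. indicator {0<..} v * a v) \<in> borel_measurable lborel"
    and E: "\<And>c. c > 0 \<Longrightarrow> integrable lborel (\<lambda>v. indicator {0<..} v * \<bar>a v\<bar> * exp (- c * v))"
    and \<xi>: "\<xi> > 0"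
  shows "integrable lborel (\<lambda>v. phi a k m v \<xi>)"
proof (cases m)
  case 0
  obtain B where B: "B \<ge> 0" "\<And>v \<xi>. \<xi> > 0 \<Longrightarrow>
     \<bar>phi a k 0 v \<xi>\<bar> \<le> indicator {0<..} v * \<bar>a v\<bar> * (2 * \<xi> * B * exp (- \<xi> * v))"
    using phi0_bound[of a k] by blast
  have "integrable lborel (\<lambda>v. (2 * \<xi> * B) * (indicator {0<..} v * \<bar>a v\<bar> * exp (- \<xi> * v)))"
    using E[OF \<xi>] by simp
  then show ?thesis unfolding 0
    by (rule int_dom) (use meas_phi[OF ma] B(2)[OF \<xi>] in \<open>simp_all add: mult_ac\<close>)
next
  case (Suc n)
  obtain B where B: "B \<ge> 0" "\<And>v \<xi>. \<xi> > 0 \<Longrightarrow>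
     \<bar>phi a k (Suc n) v \<xi>\<bar> \<le> indicator {0<..} v * \<bar>a v\<bar> * (B / \<xi> ^ n * exp (- \<xi> * v))"
    using phi_Suc_bound[of a k n] by blast
  have "integrable lborel (\<lambda>v. (B / \<xi> ^ n) * (indicator {0<..} v * \<bar>a v\<bar> * exp (- \<xi> * v)))"
    using E[OF \<xi>] by simp
  then show ?thesis unfolding Suc
    by (rule int_dom) (use meas_phi[OF ma] B(2)[OF \<xi>] in \<open>simp_all add: mult_ac\<close>)
qed

lemma phi_deriv: "((\<lambda>\<xi>. phi a k m v \<xi>) has_real_derivative phi a k (Suc m) v \<xi>) (at \<xi>)"
proof (cases "v > 0")
  case True
  have c: "((\<lambda>x. Gd k m (v * x)) has_real_derivative Gd k (Suc m) (v * \<xi>) * v) (at \<xi>)"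
    by (rule DERIV_chain2[OF Gd_deriv]) (auto intro!: derivative_eq_intros)
  have eqf: "(\<lambda>\<xi>. phi a k m v \<xi>) = (\<lambda>\<xi>. (a v * v ^ m / v) * Gd k m (v * \<xi>))"
    using True by (auto simp: phi_def)
  have eqd: "phi a k (Suc m) v \<xi> = (a v * v ^ m / v) * (Gd k (Suc m) (v * \<xi>) * v)"
    using True by (simp add: phi_def)
  show ?thesis unfolding eqf eqd by (rule DERIV_cmult[OF c])
next
  case False
  then show ?thesis unfolding phi_def by simp
qed


lemma Phi_deriv:
  assumes ma: "(\<lambda>v. indicator {0<..} v * a v) \<in> borel_measurable lborel"
    and E: "\<And>c. c > 0 \<Longrightarrow> integrable lborel (\<lambda>v. indicator {0<..} v * \<bar>a v\<bar> * exp (- c * v))"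
    and \<xi>0: "\<xi>0 > 0"
  shows "((\<lambda>\<xi>. integral\<^sup>L lborel (\<lambda>v. phi a k m v \<xi>)) has_real_derivative
           integral\<^sup>L lborel (\<lambda>v. phi a k (Suc m) v \<xi>0)) (at \<xi>0)"
proof -
  obtain B where B: "B \<ge> 0" "\<And>v \<xi>. \<xi> > 0 \<Longrightarrow>
     \<bar>phi a k (Suc m) v \<xi>\<bar> \<le> indicator {0<..} v * \<bar>a v\<bar> * (B / \<xi> ^ m * exp (- \<xi> * v))"
    using phi_Suc_bound[of a k m] by blast
  define w where "w v = (B * (2 / \<xi>0) ^ m) * (indicator {0<..} v * \<bar>a v\<bar> * exp (- (\<xi>0 / 2) * v))" for v
  show ?thesis
  proof (rule deriv_integral[where d = "\<xi>0 / 2" and w = w])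
    show "integrable lborel (\<lambda>v. phi a k m v x)" if "\<bar>x - \<xi>0\<bar> < \<xi>0 / 2" for x
    proof -
      have "x > 0" using that by arith
      from int_phi[of a, OF ma E this] show ?thesis by simp
    qed
    show "(\<lambda>v. phi a k (Suc m) v \<xi>0) \<in> borel_measurable lborel"
      by (rule meas_phi[OF ma])
    show "((\<lambda>x. phi a k m v x) has_real_derivative phi a k (Suc m) v x) (at x)" for v x
      by (rule phi_deriv)
    show "integrable lborel w" unfolding w_def using E[of "\<xi>0 / 2"] \<xi>0 by simp
    show "\<bar>phi a k (Suc m) v x\<bar> \<le> w v" if x: "\<bar>x - \<xi>0\<bar> < \<xi>0 / 2" for v x
    proof (cases "v > 0")
      case True
      have x0: "x > \<xi>0 / 2" using x by arith
      have "(\<xi>0 / 2) ^ m \<le> x ^ m" using x0 \<xi>0 by (intro power_mono) auto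
      then have "B / x ^ m \<le> B * (2 / \<xi>0) ^ m"
        using x0 \<xi>0 B(1) by (simp add: divide_simps power_divide) (metis mult.assoc mult.commute mult_left_mono)
      moreover have "exp (- x * v) \<le> exp (- (\<xi>0 / 2) * v)"
        using x0 True by (simp add: mult_right_mono)
      ultimately have "B / x ^ m * exp (- x * v) \<le> B * (2 / \<xi>0) ^ m * exp (- (\<xi>0 / 2) * v)"
        using B(1) \<xi>0 by (intro mult_mono) auto
      then have "\<bar>a v\<bar> * (B / x ^ m * exp (- x * v)) \<le> \<bar>a v\<bar> * (B * (2 / \<xi>0) ^ m * exp (- (\<xi>0 / 2) * v))"
        by (rule mult_left_mono) simp
      then show ?thesis using B(2)[of x v] x0 \<xi>0 True unfolding w_def by (simp add: mult_ac)
    next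
      case False
      then show ?thesis unfolding w_def phi_def by simp
    qed
  qed (use \<xi>0 in auto)
qed

lemma int_exp: "c > 0 \<Longrightarrow> integrable lborel (\<lambda>v::real. indicator {0<..} v * exp (- c * v))"
proof -
  assume c: "c > 0"
  have "(\<lambda>x::real. exp (- c * x)) absolutely_integrable_on {0..}"
    using integrable_on_exp_minus_to_infinity[OF c, of 0]
    by (intro nonnegative_absolutely_integrable_1) auto
  then have "set_integrable lebesgue {0<..} (\<lambda>x::real. exp (- c * x))"
    by (rule set_integrable_subset) auto
  then have "integrable lebesgue (\<lambda>v::real. indicator {0<..} v * exp (- c * v))"
    unfolding set_integrable_def by simp
  moreover have "(\<lambda>v::real. indicator {0<..} v * exp (- c * v)) \<in> borel_measurable lborel"
    by measurable
  ultimately show ?thesis using integrable_completion by blast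
qed


lemma exp_lim: "v > 0 \<Longrightarrow> ((\<lambda>\<xi>::real. exp (- \<xi> * v)) \<longlongrightarrow> 0) at_top"
  by real_asymp

lemma exp_lim': "v > 0 \<Longrightarrow> ((\<lambda>\<xi>::real. exp (- (\<xi> * v))) \<longlongrightarrow> 0) at_top"
  by real_asymp

lemma gamma_eq: "gamma_ak a k \<xi> = integral\<^sup>L lborel (\<lambda>v. phi a k 0 v \<xi>)"
proof -
  have "gamma_ak a k \<xi> = integral\<^sup>L lborel (\<lambda>v. 2 * \<xi> * (indicator {0<..} v *\<^sub>R (a v * (laguerre_fun k (2 * v * \<xi>))\<^sup>2)))"
    unfolding gamma_ak_def set_lebesgue_integral_def by simp
  also have "\<dots> = integral\<^sup>L lborel (\<lambda>v. phi a k 0 v \<xi>)"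
  proof (rule Bochner_Integration.integral_cong[OF refl])
    fix v :: real
    show "2 * \<xi> * (indicator {0<..} v *\<^sub>R (a v * (laguerre_fun k (2 * v * \<xi>))\<^sup>2)) = phi a k 0 v \<xi>"
      by (cases "v > 0") (simp_all add: phi_def Gd0_div)
  qed
  finally show ?thesis .
qed

lemma deriv_iter:
  assumes ma: "(\<lambda>v. indicator {0<..} v * a v) \<in> borel_measurable lborel"
    and E: "\<And>c. c > 0 \<Longrightarrow> integrable lborel (\<lambda>v. indicator {0<..} v * \<bar>a v\<bar> * exp (- c * v))"
  shows "\<xi> > 0 \<Longrightarrow> (deriv ^^ m) (gamma_ak a k) \<xi> = integral\<^sup>L lborel (\<lambda>v. phi a k m v \<xi>)"
proof (induction m arbitrary: \<xi>)
  case 0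
  then show ?case by (simp add: gamma_eq)
next
  case (Suc m)
  have "((deriv ^^ m) (gamma_ak a k) has_real_derivative integral\<^sup>L lborel (\<lambda>v. phi a k (Suc m) v \<xi>)) (at \<xi>)"
    by (rule has_field_derivative_transform_within_open[OF Phi_deriv[of a, OF ma E Suc.prems], of "{0<..}"])
       (use Suc in auto)
  then show ?case by (simp add: DERIV_imp_deriv)
qed

lemma deriv_iter_differentiable:
  assumes ma: "(\<lambda>v. indicator {0<..} v * a v) \<in> borel_measurable lborel"
    and E: "\<And>c. c > 0 \<Longrightarrow> integrable lborel (\<lambda>v. indicator {0<..} v * \<bar>a v\<bar> * exp (- c * v))"
    and \<xi>: "\<xi> > 0"
  shows "(deriv ^^ m) (gamma_ak a k) differentiable (at \<xi>)"
proof -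
  have "((deriv ^^ m) (gamma_ak a k) has_real_derivative integral\<^sup>L lborel (\<lambda>v. phi a k (Suc m) v \<xi>)) (at \<xi>)"
    by (rule has_field_derivative_transform_within_open[OF Phi_deriv[of a, OF ma E \<xi>], of "{0<..}"])
       (use \<xi> deriv_iter[OF ma E] in auto)
  then show ?thesis using real_differentiable_def by blast
qed


lemma Phi_lim_L1:
  assumes ia: "integrable lborel (\<lambda>v. indicator {0<..} v * a v)"
  shows "((\<lambda>\<xi>. integral\<^sup>L lborel (\<lambda>v. phi a k (Suc m) v \<xi>)) \<longlongrightarrow> 0) at_top"
proof -
  obtain B where B: "B \<ge> 0" "\<And>v \<xi>. \<xi> > 0 \<Longrightarrow>
     \<bar>phi a k (Suc m) v \<xi>\<bar> \<le> indicator {0<..} v * \<bar>a v\<bar> * (B / \<xi> ^ m * exp (- \<xi> * v))"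
    using phi_Suc_bound[of a k m] by blast
  have ma: "(\<lambda>v. indicator {0<..} v * a v) \<in> borel_measurable lborel"
    using ia by (rule borel_measurable_integrable)
  have bnd1: "\<bar>phi a k (Suc m) v \<xi>\<bar> \<le> B * \<bar>indicator {0<..} v * a v\<bar>" if "\<xi> \<ge> 1" for v \<xi>
  proof (cases "v > 0")
    case True
    have "B / \<xi> ^ m \<le> B" using that B(1) by (simp add: divide_le_eq mult_le_cancel_left1 one_le_power)
    moreover have "exp (- \<xi> * v) \<le> 1" using that True by simp
    ultimately have "B / \<xi> ^ m * exp (- \<xi> * v) \<le> B * 1"
      using B(1) that by (intro mult_mono) auto
    then have "\<bar>a v\<bar> * (B / \<xi> ^ m * exp (- \<xi> * v)) \<le> \<bar>a v\<bar> * B"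
      by (intro mult_left_mono) auto
    then show ?thesis using B(2)[of \<xi> v] that True by (simp add: abs_mult mult_ac)
  next
    case False
    then show ?thesis by (simp add: phi_def)
  qed
    have p2: "(\<lambda>v. phi a k (Suc m) v \<xi>) \<in> borel_measurable lborel" for \<xi>
      by (rule meas_phi[OF ma])
    have p3: "integrable lborel (\<lambda>v. B * \<bar>indicator {0<..} v * a v\<bar>)"
      using ia by simp
    have p4: "AE v in lborel. ((\<lambda>\<xi>. phi a k (Suc m) v \<xi>) \<longlongrightarrow> 0) at_top"
    proof (intro AE_I2)
      fix v :: real
      show "((\<lambda>\<xi>. phi a k (Suc m) v \<xi>) \<longlongrightarrow> 0) at_top"
      proof (cases "v > 0")
        case True
        show ?thesis
        proof (rule Lim_null_comparison)
          show "\<forall>\<^sub>F \<xi> in at_top. norm (phi a k (Suc m) v \<xi>) \<le> \<bar>a v\<bar> * B * exp (- \<xi> * v)"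
            using eventually_ge_at_top[of "1::real"]
          proof eventually_elim
            case (elim \<xi>)
            have "B / \<xi> ^ m \<le> B" using elim B(1) by (simp add: divide_le_eq mult_le_cancel_left1 one_le_power)
            then have "B / \<xi> ^ m * exp (- \<xi> * v) \<le> B * exp (- \<xi> * v)"
              by (intro mult_right_mono) auto
            then have "\<bar>a v\<bar> * (B / \<xi> ^ m * exp (- \<xi> * v)) \<le> \<bar>a v\<bar> * (B * exp (- \<xi> * v))"
              by (intro mult_left_mono) auto
            then show ?case using B(2)[of \<xi> v] elim True by (simp add: mult_ac)
          qed
          show "((\<lambda>\<xi>. \<bar>a v\<bar> * B * exp (- \<xi> * v)) \<longlongrightarrow> 0) at_top"
            using tendsto_mult_right_zero[OF exp_lim[OF True]] by simp
        qed
      next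
        case False
        then show ?thesis by (simp add: phi_def)
      qed
    qed
    have p5: "\<forall>\<^sub>F \<xi> in at_top. AE v in lborel. norm (phi a k (Suc m) v \<xi>) \<le> B * \<bar>indicator {0<..} v * a v\<bar>"
      using eventually_ge_at_top[of "1::real"] by eventually_elim (auto intro: bnd1)
    have p1: "(\<lambda>v. 0::real) \<in> borel_measurable lborel" by simp
    show ?thesis
      using integral_dominated_convergence_at_top[of "\<lambda>v. 0::real" lborel "\<lambda>\<xi> v. phi a k (Suc m) v \<xi>", OF p1 p2 p3 p4 p5]
      by simp
qed


lemma J_lim: "((\<lambda>\<xi>. integral\<^sup>L lborel (\<lambda>v::real. indicator {0<..} v * exp (- \<xi> * v))) \<longlongrightarrow> 0) at_top"
proof -
  have p1: "(\<lambda>v::real. 0::real) \<in> borel_measurable lborel" by simp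
  have p2: "(\<lambda>v::real. indicator {0<..} v * exp (- \<xi> * v)) \<in> borel_measurable lborel" for \<xi> :: real
    by measurable
  have p3: "integrable lborel (\<lambda>v::real. indicator {0<..} v * exp (- 1 * v))"
    by (rule int_exp) simp
  have p4: "AE v in (lborel::real measure). ((\<lambda>\<xi>. indicator {0<..} v * exp (- \<xi> * v)) \<longlongrightarrow> 0) at_top"
  proof (intro AE_I2)
    fix v :: real
    show "((\<lambda>\<xi>. indicator {0<..} v * exp (- \<xi> * v)) \<longlongrightarrow> 0) at_top"
      by (cases "v > 0") (auto intro: exp_lim exp_lim')
  qed
  have p5: "\<forall>\<^sub>F \<xi> in at_top. AE v in (lborel::real measure). norm (indicator {0<..} v * exp (- \<xi> * v)) \<le> indicator {0<..} v * exp (- 1 * v)"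
    using eventually_ge_at_top[of "1::real"]
  proof eventually_elim
    case (elim \<xi>)
    show ?case
    proof (intro AE_I2)
      fix v :: real
      show "norm (indicator {0<..} v * exp (- \<xi> * v)) \<le> indicator {0<..} v * exp (- 1 * v)"
        using elim by (cases "v > 0") (auto simp: mult_right_mono)
    qed
  qed
  show ?thesis
    using integral_dominated_convergence_at_top[of "\<lambda>v::real. 0::real" lborel "\<lambda>\<xi> v. indicator {0<..} v * exp (- \<xi> * v)", OF p1 p2 p3 p4 p5]
    by simp
qed

lemma E_Linf:
  fixes a :: "real \<Rightarrow> real"
  assumes ma: "(\<lambda>v. indicator {0<..} v * a v) \<in> borel_measurable lborel"
    and bd: "AE x in lborel. x \<in> {0<..} \<longrightarrow> \<bar>a x\<bar> \<le> C"
    and c: "c > 0"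
  shows "integrable lborel (\<lambda>v. indicator {0<..} v * \<bar>a v\<bar> * exp (- c * v))"
proof (rule Bochner_Integration.integrable_bound)
  show "integrable lborel (\<lambda>v. C * (indicator {0<..} v * exp (- c * v)))"
    using int_exp[OF c] by simp
  have "(\<lambda>v. \<bar>indicator {0<..} v * a v\<bar> * exp (- c * v)) \<in> borel_measurable lborel"
    using ma by measurable
  then show "(\<lambda>v. indicator {0<..} v * \<bar>a v\<bar> * exp (- c * v)) \<in> borel_measurable lborel"
    by (simp add: abs_mult)
  show "AE x in lborel. norm (indicator {0<..} x * \<bar>a x\<bar> * exp (- c * x)) \<le> norm (C * (indicator {0<..} x * exp (- c * x)))"
    using bd
  proof eventually_elim
    case (elim x)
    show ?case
    proof (cases "x > 0")
      case True
      then have "\<bar>a x\<bar> \<le> C" using elim by simp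
      then have "\<bar>a x\<bar> * exp (- c * x) \<le> C * exp (- c * x)" by (intro mult_right_mono) auto
      then show ?thesis using True by (simp add: abs_mult)
    next
      case False
      then show ?thesis by simp
    qed
  qed
qed

lemma Phi_lim_Linf:
  fixes a :: "real \<Rightarrow> real"
  assumes ma: "(\<lambda>v. indicator {0<..} v * a v) \<in> borel_measurable lborel"
    and bd: "AE x in lborel. x \<in> {0<..} \<longrightarrow> \<bar>a x\<bar> \<le> C"
  shows "((\<lambda>\<xi>. integral\<^sup>L lborel (\<lambda>v. phi a k (Suc m) v \<xi>)) \<longlongrightarrow> 0) at_top"
proof -
  obtain B where B: "B \<ge> 0" "\<And>v \<xi>. \<xi> > 0 \<Longrightarrow>
     \<bar>phi a k (Suc m) v \<xi>\<bar> \<le> indicator {0<..} v * \<bar>a v\<bar> * (B / \<xi> ^ m * exp (- \<xi> * v))"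
    using phi_Suc_bound[of a k m] by blast
  have E: "\<And>c. c > 0 \<Longrightarrow> integrable lborel (\<lambda>v. indicator {0<..} v * \<bar>a v\<bar> * exp (- c * v))"
    by (rule E_Linf[OF ma bd])
  show ?thesis
  proof (rule Lim_null_comparison)
    show "((\<lambda>\<xi>. \<bar>C\<bar> * B * integral\<^sup>L lborel (\<lambda>v. indicator {0<..} v * exp (- \<xi> * v))) \<longlongrightarrow> 0) at_top"
      using tendsto_mult_right_zero[OF J_lim] by simp
    show "\<forall>\<^sub>F \<xi> in at_top. norm (integral\<^sup>L lborel (\<lambda>v. phi a k (Suc m) v \<xi>))
          \<le> \<bar>C\<bar> * B * integral\<^sup>L lborel (\<lambda>v. indicator {0<..} v * exp (- \<xi> * v))"
      using eventually_ge_at_top[of "1::real"]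
    proof eventually_elim
      case (elim \<xi>)
      then have \<xi>: "\<xi> > 0" by simp
      have "norm (integral\<^sup>L lborel (\<lambda>v. phi a k (Suc m) v \<xi>)) \<le> integral\<^sup>L lborel (\<lambda>v. norm (phi a k (Suc m) v \<xi>))"
        by (rule integral_norm_bound)
      also have "\<dots> \<le> integral\<^sup>L lborel (\<lambda>v. (\<bar>C\<bar> * B) * (indicator {0<..} v * exp (- \<xi> * v)))"
      proof (rule integral_mono_AE)
        show "integrable lborel (\<lambda>v. norm (phi a k (Suc m) v \<xi>))"
          using int_phi[of a, OF ma E \<xi>] by simp
        show "integrable lborel (\<lambda>v. (\<bar>C\<bar> * B) * (indicator {0<..} v * exp (- \<xi> * v)))"
          using int_exp[OF \<xi>] by simp
        show "AE v in lborel. norm (phi a k (Suc m) v \<xi>) \<le> (\<bar>C\<bar> * B) * (indicator {0<..} v * exp (- \<xi> * v))"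
          using bd
        proof eventually_elim
          case (elim v)
          show ?case
          proof (cases "v > 0")
            case True
            then have av: "\<bar>a v\<bar> \<le> \<bar>C\<bar>" using elim by auto
            have b1: "B / \<xi> ^ m \<le> B" using \<open>1 \<le> \<xi>\<close> B(1) by (simp add: divide_le_eq mult_le_cancel_left1 one_le_power)
            have b2: "B / \<xi> ^ m * exp (- \<xi> * v) \<le> B * exp (- \<xi> * v)"
              using b1 by (intro mult_right_mono) auto
            have b3: "0 \<le> B / \<xi> ^ m * exp (- \<xi> * v)" using B(1) \<xi> by simp
            have "\<bar>a v\<bar> * (B / \<xi> ^ m * exp (- \<xi> * v)) \<le> \<bar>C\<bar> * (B * exp (- \<xi> * v))"
              by (rule mult_mono[OF av b2 _ b3]) simp
            then show ?thesis using B(2)[OF \<xi>, of v] True by (simp add: mult_ac)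
          next
            case False
            then show ?thesis by (simp add: phi_def)
          qed
        qed
      qed
      also have "\<dots> = \<bar>C\<bar> * B * integral\<^sup>L lborel (\<lambda>v. indicator {0<..} v * exp (- \<xi> * v))"
        by simp
      finally show ?case .
    qed
  qed
qed

theorem mainTheorem7:
  fixes a :: "real \<Rightarrow> real" and k :: nat
  assumes "L1_pos a \<or> Linf_pos a"
    and "Linf_pos (gamma_ak a k)"
  shows "\<forall>n\<ge>1. (\<forall>\<xi>>0. ((deriv ^^ (n - 1)) (gamma_ak a k)) differentiable (at \<xi>))
           \<and> (((deriv ^^ n) (gamma_ak a k)) \<longlongrightarrow> 0) at_top"
proof -
  have key: "(\<lambda>v. indicator {0<..} v * a v) \<in> borel_measurable lborel \<and>
     (\<forall>c>0. integrable lborel (\<lambda>v. indicator {0<..} v * \<bar>a v\<bar> * exp (- c * v))) \<and>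
     (\<forall>m. ((\<lambda>\<xi>. integral\<^sup>L lborel (\<lambda>v. phi a k (Suc m) v \<xi>)) \<longlongrightarrow> 0) at_top)"
    using assms(1)
  proof
    assume "L1_pos a"
    then have ia: "integrable lborel (\<lambda>v. indicator {0<..} v * a v)"
      unfolding L1_pos_def set_integrable_def by simp
    have ma: "(\<lambda>v. indicator {0<..} v * a v) \<in> borel_measurable lborel"
      using ia by (rule borel_measurable_integrable)
    have E: "integrable lborel (\<lambda>v. indicator {0<..} v * \<bar>a v\<bar> * exp (- c * v))" if "c > 0" for c
    proof (rule int_dom)
      show "integrable lborel (\<lambda>v. \<bar>indicator {0<..} v * a v\<bar>)" using ia by simp
      have "(\<lambda>v. \<bar>indicator {0<..} v * a v\<bar> * exp (- c * v)) \<in> borel_measurable lborel"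
        using ma by measurable
      then show "(\<lambda>v. indicator {0<..} v * \<bar>a v\<bar> * exp (- c * v)) \<in> borel_measurable lborel"
        by (simp add: abs_mult)
      show "\<bar>indicator {0<..} v * \<bar>a v\<bar> * exp (- c * v)\<bar> \<le> \<bar>indicator {0<..} v * a v\<bar>" for v
        using that by (cases "v > 0") (auto simp: abs_mult mult_left_le)
    qed
    show ?thesis using ma E Phi_lim_L1[OF ia] by blast
  next
    assume "Linf_pos a"
    then obtain C where ma: "(\<lambda>v. indicator {0<..} v * a v) \<in> borel_measurable lborel"
      and bd: "AE x in lborel. x \<in> {0<..} \<longrightarrow> \<bar>a x\<bar> \<le> C"
      unfolding Linf_pos_def set_borel_measurable_def by auto
    show ?thesis using ma E_Linf[OF ma bd] Phi_lim_Linf[OF ma bd] by blast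
  qed
  then have ma: "(\<lambda>v. indicator {0<..} v * a v) \<in> borel_measurable lborel"
    and E: "\<And>c. c > 0 \<Longrightarrow> integrable lborel (\<lambda>v. indicator {0<..} v * \<bar>a v\<bar> * exp (- c * v))"
    and L: "\<And>m. ((\<lambda>\<xi>. integral\<^sup>L lborel (\<lambda>v. phi a k (Suc m) v \<xi>)) \<longlongrightarrow> 0) at_top"
    by auto
  show ?thesis
  proof (rule allI, rule impI, rule conjI)
    fix n :: nat
    show "\<forall>\<xi>>0. (deriv ^^ (n - 1)) (gamma_ak a k) differentiable (at \<xi>)"
      using deriv_iter_differentiable[of a, OF ma E] by blast
    assume n: "n \<ge> 1"
    then obtain m where m: "n = Suc m" by (cases n) auto
    have "eventually (\<lambda>\<xi>. integral\<^sup>L lborel (\<lambda>v. phi a k (Suc m) v \<xi>) = (deriv ^^ n) (gamma_ak a k) \<xi>) at_top"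
      using eventually_gt_at_top[of "0::real"]
    proof eventually_elim
      case (elim \<xi>)
      show ?case unfolding m using deriv_iter[where a=a and m="Suc m" and k=k, OF ma E elim] by (rule sym)
    qed
    then show "((deriv ^^ n) (gamma_ak a k) \<longlongrightarrow> 0) at_top"
      using Lim_transform_eventually[OF L] by blast
  qed
qed

end
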